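(* Under the standing assumptions (with $K\neq0$) and $\lambda_{\max}(M(0))<1$, let $r^*\in(0,r_A)$ be the unique profit rate with $\lambda_{\max}(M(r^* ))=1$. Then: (i) for all $0\le r_1<r_2\le r^*$, $\Theta^{price}(r_2)\subsetneq\Theta^{price}(r_1)\subseteq\Theta^{val}$; (ii) $\Theta^{price}(r^* )=\{\mathbf w^*\}$, where $\mathbf w^*$ is the left Perron eigenvector of $M(r^* )$ (all components positive) normalized by $w^*_1=1$; in particular no $\mathbf w\in\Theta^{price}(r^* )$ satisfies $\mathbf w^T(I-M(r^* ))>\mathbf 0^T$ strictly.
   Context: Fix $n\ge 2$. $A$ and $K$ are $n\times n$ entrywise nonnegative real matrices, with $K$ not the zero matrix; $\delta_1,\dots,\delta_n\in(0,1]$, $D=K\,\mathrm{diag}(\delta_1,\dots,\delta_n)$, and $\tilde A=A+D$. $L=\mathrm{diag}(l_1,\dots,l_n)$ with all $l_j>0$. $B$ is an $n\times n$ entrywise nonnegative matrix with no zero column. Standing assumption: $\tilde A$ is irreducible and $\lambda_{\max}(\tilde A)<1$, where $\lambda_{\max}(X)$ denotes the spectral radius of a square matrix $X$. $r_A>0$ is defined by $\lambda_{\max}(\tilde A+r_AK)=1$. For $r\in[0,r_A)$, $M(r):=L[I-\tilde A-rK]^{-1}B$, and $M_0:=M(0)=L(I-\tilde A)^{-1}B$. Vector inequalities are componentwise. The value-feasible domain is $\Theta^{val}:=\{\mathbf c\in\mathbb R^n:\ c_j>0\ \forall j,\ c_1=1,\ \mathbf c^T(I-M_0)\ge \mathbf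 0^T\}$, and the price–wage feasible domain is $\Theta^{price}(r):=\{\mathbf w\in\mathbb R^n:\ w_j>0\ \forall j,\ w_1=1,\ \mathbf w^T(I-M(r))\ge\mathbf 0^T\}$. *)

theory Defs
  imports "HOL-Analysis.Analysis"
begin

definition spec_rad :: "real^'n^'n \<Rightarrow> real" where
  "spec_rad X = Max {cmod z | z. det ((mat z :: complex^'n^'n)
                         - (\<chi> i j. complex_of_real (X $ i $ j))) = 0}"

definition nonneg_mat :: "real^'n^'m \<Rightarrow> bool" where
  "nonneg_mat X \<longleftrightarrow> (\<forall>i j. X $ i $ j \<ge> 0)"

text \<open>Irreducibility: there is no nonempty proper index set S that is closed,
  i.e. with X i j = 0 for all i in S and j not in S (equivalently, X is not
  permutation-similar to a block triangular matrix).\<close>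
definition irreducible_mat :: "real^'n^'n \<Rightarrow> bool" where
  "irreducible_mat X \<longleftrightarrow>
     (\<forall>S. S \<noteq> {} \<and> S \<noteq> UNIV \<longrightarrow> (\<exists>i\<in>S. \<exists>j. j \<notin> S \<and> X $ i $ j \<noteq> 0))"

definition diag_mat :: "real^'n \<Rightarrow> real^'n^'n" where
  "diag_mat d = (\<chi> i j. if i = j then d $ i else 0)"

definition tildeA :: "real^'n^'n \<Rightarrow> real^'n^'n \<Rightarrow> real^'n \<Rightarrow> real^'n^'n" where
  "tildeA A K \<delta> = A + K ** diag_mat \<delta>"

definition Mmat :: "real^'n^'n \<Rightarrow> real^'n^'n \<Rightarrow> real^'n \<Rightarrow> real^'n \<Rightarrow> real^'n^'n
                     \<Rightarrow> real \<Rightarrow> real^'n^'n" where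
  "Mmat A K \<delta> l B r =
     diag_mat l ** matrix_inv (mat 1 - tildeA A K \<delta> - r *\<^sub>R K) ** B"

text \<open>Feasible domains; \<open>i1\<close> is the distinguished (first) index used for normalization.\<close>
definition Theta_val :: "'n \<Rightarrow> real^'n^'n \<Rightarrow> real^'n^'n \<Rightarrow> real^'n \<Rightarrow> real^'n
                         \<Rightarrow> real^'n^'n \<Rightarrow> (real^'n) set" where
  "Theta_val i1 A K \<delta> l B =
     {c. (\<forall>j. c $ j > 0) \<and> c $ i1 = 1 \<and>
         (\<forall>j. (c v* (mat 1 - Mmat A K \<delta> l B 0)) $ j \<ge> 0)}"

definition Theta_price :: "'n \<Rightarrow> real^'n^'n \<Rightarrow> real^'n^'n \<Rightarrow> real^'n \<Rightarrow> real^'n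
                         \<Rightarrow> real^'n^'n \<Rightarrow> real \<Rightarrow> (real^'n) set" where
  "Theta_price i1 A K \<delta> l B r =
     {w. (\<forall>j. w $ j > 0) \<and> w $ i1 = 1 \<and>
         (\<forall>j. (w v* (mat 1 - Mmat A K \<delta> l B r)) $ j \<ge> 0)}"

end

theory Submission
  imports Defs "HOL-Computational_Algebra.Polynomial"
begin



lemma mv_nth: "(X *v x) $ i = (\<Sum>j\<in>UNIV. X$i$j * x$j)"
  by (simp add: matrix_vector_mult_def)

lemma vm_nth: "(x v* X) $ j = (\<Sum>i\<in>UNIV. x$i * X$i$j)"
  by (simp add: vector_matrix_mult_def mult.commute)

lemma mm_nth: "(X ** Y) $ i $ j = (\<Sum>k\<in>UNIV. X$i$k * Y$k$j)"
  by (simp add: matrix_matrix_mult_def)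

lemma matrix_inv_props:
  assumes "invertible X"
  shows "X ** matrix_inv X = mat 1 \<and> matrix_inv X ** X = mat 1"
  using assms unfolding invertible_def matrix_inv_def by (rule someI_ex)

lemma matrix_diff_ldistrib:
  fixes A B C :: "'a::ring_1^'n^'n"
  shows "A ** (B - C) = A ** B - A ** C"
  by (vector matrix_matrix_mult_def sum_subtractf right_diff_distrib)

lemma matrix_diff_rdistrib:
  fixes A B C :: "'a::ring_1^'n^'n"
  shows "(B - C) ** A = B ** A - C ** A"
  by (vector matrix_matrix_mult_def sum_subtractf left_diff_distrib)

lemma irrD:
  assumes "irreducible_mat P" "S \<noteq> {}" "S \<noteq> UNIV"
  shows "\<exists>i\<in>S. \<exists>j. j \<notin> S \<and> P$i$j \<noteq> 0"
  using assms(1) unfolding irreducible_mat_def using assms(2,3) by blast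

lemma transpose_nth: "transpose P $ i $ j = P $ j $ i"
  by (simp add: transpose_def)

lemma irreducible_transpose:
  assumes "irreducible_mat P"
  shows "irreducible_mat (transpose P)"
  unfolding irreducible_mat_def
proof (intro allI impI)
  fix S :: "'a set" assume S: "S \<noteq> {} \<and> S \<noteq> UNIV"
  have "- S \<noteq> {}" using S by (metis double_complement Compl_empty_eq)
  moreover have "- S \<noteq> UNIV" using S by (metis double_complement Compl_UNIV_eq)
  ultimately have C: "- S \<noteq> {} \<and> - S \<noteq> UNIV" by (rule conjI)
  have "\<exists>i\<in>- S. \<exists>j. j \<notin> - S \<and> P $ i $ j \<noteq> 0"
    by (rule assms[unfolded irreducible_mat_def, rule_format, of "- S", OF C])
  then obtain i j where "i \<in> - S" "j \<notin> - S" "P $ i $ j \<noteq> 0"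
    by blast
  then have "j \<in> S" "i \<notin> S" "transpose P $ j $ i \<noteq> 0" by (simp_all add: transpose_nth)
  then show "\<exists>i\<in>S. \<exists>j. j \<notin> S \<and> transpose P $ i $ j \<noteq> 0"
    by blast
qed

lemma nonneg_transpose: "nonneg_mat P \<Longrightarrow> nonneg_mat (transpose P)"
  by (simp add: nonneg_mat_def transpose_nth)

lemma sum_ge_term:
  fixes f :: "'a::finite \<Rightarrow> real"
  assumes "\<forall>k. f k \<ge> 0"
  shows "f j \<le> sum f UNIV"
  using assms by (intro member_le_sum) auto

lemma pos_lemma:
  fixes P :: "real^'n^'n"
  assumes nn: "nonneg_mat P" and irr: "irreducible_mat P"
    and x0: "\<forall>i. x$i \<ge> 0" and xnz: "x \<noteq> 0"
    and z: "\<forall>i. x$i = 0 \<longrightarrow> (P *v x)$i \<le> 0"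
  shows "\<forall>i. x$i > 0"
proof (rule ccontr)
  assume "\<not> (\<forall>i. x$i > 0)"
  then obtain i0 where "\<not> x$i0 > 0" by blast
  then have "x$i0 = 0" using x0 by (meson not_less order.antisym)
  define Z where "Z = {i. x$i = 0}"
  have "Z \<noteq> {}" using \<open>x$i0 = 0\<close> Z_def by auto
  moreover have "Z \<noteq> UNIV"
  proof
    assume "Z = UNIV" then have "x = 0" by (auto simp: Z_def vec_eq_iff)
    with xnz show False by simp
  qed
  ultimately have "\<exists>i\<in>Z. \<exists>j. j \<notin> Z \<and> P$i$j \<noteq> 0" by (rule irrD[OF irr])
  then obtain i j where ij: "i \<in> Z" "j \<notin> Z" "P$i$j \<noteq> 0" by blast
  have "P$i$j \<ge> 0" using nn unfolding nonneg_mat_def by simp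
  then have Pp: "P$i$j > 0" using ij by linarith
  have "x$j \<noteq> 0" using ij Z_def by simp
  then have xp: "x$j > 0" using x0[rule_format, of j] by linarith
  from Pp xp have "0 < P$i$j * x$j" by simp
  also have "\<dots> \<le> (P *v x)$i"
    unfolding mv_nth using nn x0 unfolding nonneg_mat_def
    by (intro sum_ge_term) auto
  finally show False using z ij Z_def by force
qed




lemma col_pos:
  fixes P :: "real^'n^'n"
  assumes n2: "CARD('n) \<ge> 2" and nn: "nonneg_mat P" and irr: "irreducible_mat P"
  shows "\<exists>i. P$i$j > 0"
proof -
  have "UNIV - {j} \<noteq> {}"
  proof
    assume "UNIV - {j} = {}"
    then have "(UNIV::'n set) = {j}" by auto
    then have "CARD('n) = card {j}" by (rule arg_cong)
    then have "CARD('n) = 1" by simp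
    with n2 show False by simp
  qed
  moreover have "UNIV - {j} \<noteq> UNIV" by auto
  ultimately have "\<exists>i\<in>UNIV - {j}. \<exists>k. k \<notin> UNIV - {j} \<and> P$i$k \<noteq> 0" by (rule irrD[OF irr])
  then obtain i k where "i \<in> UNIV - {j}" "k \<notin> UNIV - {j}" "P$i$k \<noteq> 0" by blast
  then have "P$i$j \<noteq> 0" by simp
  moreover have "P$i$j \<ge> 0" using nn unfolding nonneg_mat_def by simp
  ultimately have "P$i$j > 0" by linarith
  then show ?thesis by blast
qed

lemma perron_exists:
  fixes P :: "real^'n^'n"
  assumes n2: "CARD('n) \<ge> 2" and nn: "nonneg_mat P" and irr: "irreducible_mat P"
  shows "\<exists>v c. (\<forall>i. v$i > 0) \<and> P *v v = c *\<^sub>R v"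
proof -
  define S where "S = {x::real^'n. (\<forall>i. 0 \<le> x$i) \<and> sum (\<lambda>i. x$i) UNIV = 1}"
  define g where "g x = sum (\<lambda>i. (P *v x)$i) UNIV" for x
  define f where "f x = inverse (g x) *\<^sub>R (P *v x)" for x
  have Pxnn: "(P *v x)$i \<ge> 0" if "\<forall>i. 0 \<le> x$i" for x i
    unfolding mv_nth using nn that unfolding nonneg_mat_def by (intro sum_nonneg) auto
  have gpos: "g x > 0" if "x \<in> S" for x
  proof -
    have x0: "\<forall>i. 0 \<le> x$i" and s1: "sum (\<lambda>i. x$i) UNIV = 1" using that S_def by auto
    obtain j where "x$j \<noteq> 0"
    proof (rule ccontr)
      assume "\<not> thesis"
      then have "\<forall>j. x$j = 0" using that by blast
      then show False using s1 by simp
    qed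
    then have xj: "x$j > 0" using x0[rule_format, of j] by linarith
    obtain i where Pij: "P$i$j > 0" using col_pos[OF n2 nn irr] by blast
    have "0 < P$i$j * x$j" using xj Pij by simp
    also have "\<dots> \<le> (P *v x)$i"
      unfolding mv_nth using nn x0 unfolding nonneg_mat_def
      by (intro sum_ge_term) auto
    also have "\<dots> \<le> g x" unfolding g_def using Pxnn[OF x0] by (intro sum_ge_term) auto
    finally show ?thesis .
  qed
  have "compact S"
  unfolding compact_eq_bounded_closed
  proof (rule conjI)
    have "S \<subseteq> cbox 0 1"
    proof
      fix x assume "x \<in> S"
      then have x0: "\<forall>i. 0 \<le> x$i" and s1: "sum (\<lambda>i. x$i) UNIV = 1" using S_def by auto
      have "x$i \<le> 1" for i using sum_ge_term[of "\<lambda>i. x$i" i] x0 s1 by simp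
      then show "x \<in> cbox 0 1" using x0 by (simp add: mem_box_cart)
    qed
    then show "bounded S" using bounded_cbox bounded_subset by blast
    show "closed S" unfolding S_def
      by (intro closed_Collect_conj closed_Collect_all closed_Collect_le closed_Collect_eq continuous_intros)
  qed
  moreover have "convex S"
    unfolding convex_def
  proof (intro ballI allI impI)
    fix x y :: "real^'n" and a b :: real
    assume x: "x \<in> S" and y: "y \<in> S" and ab: "0 \<le> a" "0 \<le> b" "a + b = 1"
    have x0: "\<forall>i. 0 \<le> x$i" and sx: "sum (\<lambda>i. x$i) UNIV = 1" using x S_def by simp_all
    have y0: "\<forall>i. 0 \<le> y$i" and sy: "sum (\<lambda>i. y$i) UNIV = 1" using y S_def by simp_all
    have "\<forall>i. 0 \<le> (a *\<^sub>R x + b *\<^sub>R y)$i" using x0 y0 ab by simp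
    moreover have "sum (\<lambda>i. (a *\<^sub>R x + b *\<^sub>R y)$i) UNIV = a * sum (\<lambda>i. x$i) UNIV + b * sum (\<lambda>i. y$i) UNIV"
      by (simp add: sum.distrib sum_distrib_left)
    ultimately show "a *\<^sub>R x + b *\<^sub>R y \<in> S" unfolding S_def using sx sy ab by simp
  qed
  moreover have "S \<noteq> {}"
  proof -
    define y :: "real^'n" where "y = (\<chi> i. 1 / real CARD('n))"
    have "y \<in> S" unfolding S_def y_def by simp
    then show ?thesis by auto
  qed
  moreover have "continuous_on S f"
    unfolding f_def g_def
    using gpos unfolding g_def
    by (intro continuous_intros) (metis less_irrefl)
  moreover have "f \<in> S \<rightarrow> S"
  proof
    fix x assume xS: "x \<in> S"
    then have x0: "\<forall>i. 0 \<le> x$i" using S_def by auto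
    have "0 \<le> f x $ i" for i
      unfolding f_def using gpos[OF xS] Pxnn[OF x0] by simp
    moreover have "sum (\<lambda>i. f x $ i) UNIV = 1"
      unfolding f_def using gpos[OF xS]
      by (simp add: sum_distrib_left[symmetric] g_def)
    ultimately show "f x \<in> S" unfolding S_def by auto
  qed
  ultimately obtain x where xS: "x \<in> S" and fx: "f x = x" by (rule brouwer)
  have x0: "\<forall>i. 0 \<le> x$i" and s1: "sum (\<lambda>i. x$i) UNIV = 1" using xS S_def by auto
  have gne: "g x \<noteq> 0" using gpos[OF xS] by simp
  have "P *v x = g x *\<^sub>R (inverse (g x) *\<^sub>R (P *v x))" using gne by simp
  then have Px: "P *v x = g x *\<^sub>R x" using fx unfolding f_def by simp
  have xnz: "x \<noteq> 0" using s1 by auto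
  have "\<forall>i. x$i > 0"
    by (rule pos_lemma[OF nn irr x0 xnz]) (simp add: Px)
  then show ?thesis using Px by blast
qed




lemma mat_mv_nth: "(mat k *v x) $ i = k * x$i"
  by (simp add: mv_nth mat_def if_distrib if_distribR cong del: if_weak_cong)

lemma inner_pos:
  fixes u v :: "real^'n"
  assumes "\<forall>i. u$i > 0" "\<forall>i. v$i > 0"
  shows "inner u v > 0"
  unfolding inner_vec_def using assms
  by (intro sum_pos2[where i=undefined]) (auto intro: less_imp_le)

lemma spec_rad_eq:
  fixes P :: "real^'n^'n"
  assumes nn: "nonneg_mat P" and v: "\<forall>i. v$i > 0" and Pv: "P *v v = c *\<^sub>R v"
    and u: "\<forall>i. u$i > 0" and uP: "u v* P = c' *\<^sub>R u"
  shows "spec_rad P = c \<and> c' = c"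
proof -
  define PC :: "complex^'n^'n" where "PC = (\<chi> i j. complex_of_real (P$i$j))"
  have uv: "inner u v > 0" using inner_pos[OF u v] .
  have "inner (u v* P) v = inner u (P *v v)" by (rule dot_lmul_matrix)
  then have "c' * inner u v = c * inner u v" using Pv uP by simp
  then have cc: "c' = c" using uv by simp
  have c0: "c \<ge> 0"
  proof -
    have "(P *v v)$undefined \<ge> 0"
      unfolding mv_nth using nn v unfolding nonneg_mat_def by (intro sum_nonneg mult_nonneg_nonneg) (auto simp: less_imp_le)
    then have "c * v$undefined \<ge> 0" using Pv by simp
    then show ?thesis using v[rule_format, of undefined] by (simp add: zero_le_mult_iff)
  qed
  have bound: "cmod z \<le> c" if dz: "det (mat z - PC) = 0" for z
  proof -
    have "\<not> invertible (mat z - PC)" using dz invertible_det_nz by auto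
    then have "\<not>(\<exists>B. B ** (mat z - PC) = mat 1)" using invertible_left_inverse by blast
    then obtain x where x: "(mat z - PC) *v x = 0" "x \<noteq> 0"
      using matrix_left_invertible_ker by blast
    have ev: "z * x$i = (\<Sum>j\<in>UNIV. PC$i$j * x$j)" for i
    proof -
      have "((mat z - PC) *v x)$i = 0" using x by simp
      then have "(mat z *v x)$i - (PC *v x)$i = 0" by (simp add: matrix_vector_mult_diff_rdistrib)
      then show ?thesis unfolding mat_mv_nth by (simp add: mv_nth)
    qed
    define a where "a = (\<chi> i. cmod (x$i))"
    have a0: "\<forall>i. a$i \<ge> 0" by (simp add: a_def)
    have ineq: "cmod z * a$i \<le> (P *v a)$i" for i
    proof -
      have "cmod z * a$i = cmod (\<Sum>j\<in>UNIV. PC$i$j * x$j)"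
        unfolding a_def using ev[of i] by (metis norm_mult vec_lambda_beta)
      also have "\<dots> \<le> (\<Sum>j\<in>UNIV. cmod (PC$i$j * x$j))" by (rule norm_sum)
      also have "\<dots> = (P *v a)$i"
        unfolding mv_nth a_def PC_def using nn unfolding nonneg_mat_def
        by (simp add: norm_mult)
      finally show ?thesis .
    qed
    obtain k where "x$k \<noteq> 0" using x(2) by (auto simp: vec_eq_iff)
    then have ak: "a$k > 0" by (simp add: a_def)
    have ua: "inner u a > 0"
      unfolding inner_vec_def using u a0 ak
      by (intro sum_pos2[where i=k]) (auto intro!: mult_nonneg_nonneg simp: less_imp_le)
    have "cmod z * inner u a = (\<Sum>i\<in>UNIV. u$i * (cmod z * a$i))"
      unfolding inner_vec_def by (simp add: sum_distrib_left mult_ac)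
    also have "\<dots> \<le> (\<Sum>i\<in>UNIV. u$i * (P *v a)$i)"
      using u ineq by (intro sum_mono mult_left_mono) (auto intro: less_imp_le)
    also have "\<dots> = inner u (P *v a)" unfolding inner_vec_def by simp
    also have "\<dots> = inner (u v* P) a" by (rule dot_lmul_matrix[symmetric])
    also have "\<dots> = c * inner u a" using uP cc by simp
    finally have "cmod z * inner u a \<le> c * inner u a" .
    then show ?thesis using ua by simp
  qed
  have cin: "det (mat (complex_of_real c) - PC) = 0"
  proof (rule ccontr)
    assume "det (mat (complex_of_real c) - PC) \<noteq> 0"
    then have "invertible (mat (complex_of_real c) - PC)" using invertible_det_nz by auto
    then obtain B where B: "B ** (mat (complex_of_real c) - PC) = mat 1"
      using invertible_left_inverse by blast
    define x where "x = (\<chi> i. complex_of_real (v$i))"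
    have "(mat (complex_of_real c) - PC) *v x = 0"
    proof -
      have "((mat (complex_of_real c) - PC) *v x)$i = 0" for i
      proof -
        have "(P *v v)$i = c * v$i" using Pv by simp
        then have "(\<Sum>j\<in>UNIV. P$i$j * v$j) = c * v$i" by (simp add: mv_nth)
        then have "complex_of_real (\<Sum>j\<in>UNIV. P$i$j * v$j) = complex_of_real (c * v$i)" by simp
        moreover have "((mat (complex_of_real c) - PC) *v x)$i = (mat (complex_of_real c) *v x)$i - (PC *v x)$i"
          by (simp add: matrix_vector_mult_diff_rdistrib)
        ultimately show ?thesis unfolding mat_mv_nth
          by (simp add: mv_nth PC_def x_def)
      qed
      then show ?thesis by (simp add: vec_eq_iff)
    qed
    then have "B *v ((mat (complex_of_real c) - PC) *v x) = 0" by simp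
    then have "x = 0" using B by (simp add: matrix_vector_mul_assoc)
    moreover have "x$undefined \<noteq> 0" using v by (simp add: x_def) (metis less_irrefl)
    ultimately show False by simp
  qed
  define pm :: "complex poly^'n^'n" where
    "pm = (\<chi> i j. (if i = j then [:0,1:] else 0) - [:PC$i$j:])"
  have pe1: "poly (pm$i$j) z = (mat z - PC)$i$j" for i j z
    by (simp add: pm_def mat_def)
  have pe: "poly (det pm) z = det (mat z - PC)" for z
    unfolding det_def by (simp add: poly_sum poly_prod pe1)
  have pnz: "det pm \<noteq> 0"
  proof
    assume "det pm = 0"
    then have "det (mat (complex_of_real (c+1)) - PC) = 0" using pe by (metis poly_0)
    then have "cmod (complex_of_real (c+1)) \<le> c" by (rule bound)
    then show False using c0 by simp
  qed
  define S where "S = {cmod z | z. det ((mat z :: complex^'n^'n)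
                         - (\<chi> i j. complex_of_real (P $ i $ j))) = 0}"
  have S: "S = cmod ` {z. poly (det pm) z = 0}" unfolding S_def pe PC_def by auto
  have "finite S" unfolding S using poly_roots_finite[OF pnz] by simp
  moreover have "\<And>y. y \<in> S \<Longrightarrow> y \<le> c" unfolding S_def using bound PC_def by auto
  moreover have "c \<in> S" unfolding S_def using cin PC_def c0
    by (intro CollectI exI[of _ "complex_of_real c"]) simp
  ultimately have "Max S = c" by (rule Max_eqI)
  then show ?thesis unfolding spec_rad_def S_def using cc by simp
qed




lemma sub_zero:
  fixes Q :: "real^'n^'n"
  assumes nn: "nonneg_mat Q" and v: "\<forall>i. v$i > 0" and Qv: "\<forall>i. (Q *v v)$i < v$i"
    and a0: "\<forall>j. a$j \<ge> 0" and aQ: "\<forall>j. a$j \<le> (a v* Q)$j"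
  shows "a = 0"
proof (rule ccontr)
  assume "a \<noteq> 0"
  then obtain k where "a$k \<noteq> 0" by (auto simp: vec_eq_iff)
  then have ak: "a$k > 0" using a0[rule_format, of k] by linarith
  have "inner a v \<le> inner (a v* Q) v" unfolding inner_vec_def
    using aQ v by (intro sum_mono) (simp add: mult_right_mono less_imp_le)
  also have "\<dots> = inner a (Q *v v)" by (rule dot_lmul_matrix)
  also have "\<dots> < inner a v" unfolding inner_vec_def
  proof (rule sum_strict_mono_ex1)
    show "\<forall>x\<in>UNIV. inner (a $ x) ((Q *v v) $ x) \<le> inner (a $ x) (v $ x)"
      using a0 Qv by (simp add: mult_left_mono less_imp_le)
    show "\<exists>x\<in>UNIV. inner (a $ x) ((Q *v v) $ x) < inner (a $ x) (v $ x)"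
      using ak Qv by (intro bexI[of _ k]) auto
  qed simp
  finally show False by simp
qed

lemma left_neumann:
  fixes Q :: "real^'n^'n"
  assumes nn: "nonneg_mat Q" and v: "\<forall>i. v$i > 0" and Qv: "\<forall>i. (Q *v v)$i < v$i"
  shows "invertible (mat 1 - Q)"
    and "\<forall>j. (w v* (mat 1 - Q))$j \<ge> 0 \<Longrightarrow> \<forall>j. w$j \<ge> 0"
proof -
  have eq: "x v* (mat 1 - Q) = x - x v* Q" for x :: "real^'n"
    by (simp add: vector_matrix_mult_diff_rdistrib)
  have ker: "x = 0" if "x v* (mat 1 - Q) = 0" for x
  proof -
    have xx: "x = x v* Q" using that eq by simp
    define a where "a = (\<chi> j. \<bar>x$j\<bar>)"
    have "a = 0"
    proof (rule sub_zero[OF nn v Qv])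
      show "\<forall>j. 0 \<le> a $ j" by (simp add: a_def)
      show "\<forall>j. a $ j \<le> (a v* Q) $ j"
      proof
        fix j
        have xj: "x$j = (x v* Q)$j" using xx by (rule arg_cong)
        have "a$j = \<bar>x$j\<bar>" unfolding a_def by simp
        also have "\<dots> = \<bar>\<Sum>i\<in>UNIV. x$i * Q$i$j\<bar>" unfolding xj vm_nth ..
        also have "\<dots> \<le> (\<Sum>i\<in>UNIV. \<bar>x$i * Q$i$j\<bar>)" by (rule sum_abs)
        also have "\<dots> = (a v* Q)$j" unfolding vm_nth a_def
          using nn unfolding nonneg_mat_def by (simp add: abs_mult)
        finally show "a $ j \<le> (a v* Q) $ j" .
      qed
    qed
    then show ?thesis by (simp add: a_def vec_eq_iff)
  qed
  have "\<forall>x. transpose (mat 1 - Q) *v x = 0 \<longrightarrow> x = 0" using ker by simp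
  then have "\<exists>B. B ** transpose (mat 1 - Q) = mat 1"
    using matrix_left_invertible_ker by blast
  then have "\<exists>B. (mat 1 - Q) ** B = mat 1" using left_invertible_transpose by blast
  then show "invertible (mat 1 - Q)" using invertible_right_inverse by blast
  assume y: "\<forall>j. (w v* (mat 1 - Q))$j \<ge> 0"
  have y': "w$j - (w v* Q)$j \<ge> 0" for j using y[rule_format, of j] eq by simp
  define z where "z = (\<chi> j. max (- w$j) 0)"
  have "z = 0"
  proof (rule sub_zero[OF nn v Qv])
    show "\<forall>j. 0 \<le> z $ j" by (simp add: z_def)
    show "\<forall>j. z $ j \<le> (z v* Q) $ j"
    proof
      fix j
      have zQ: "(z v* Q)$j \<ge> 0" unfolding vm_nth z_def using nn unfolding nonneg_mat_def
        by (intro sum_nonneg) simp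
      show "z $ j \<le> (z v* Q) $ j"
      proof (cases "w$j < 0")
        case True
        have "z$j = - w$j" using True by (simp add: z_def)
        also have "\<dots> \<le> - (w v* Q)$j" using y'[of j] by simp
        also have "\<dots> = (\<Sum>i\<in>UNIV. (- w$i) * Q$i$j)" unfolding vm_nth
          by (simp add: sum_negf[symmetric])
        also have "\<dots> \<le> (\<Sum>i\<in>UNIV. z$i * Q$i$j)"
          using nn unfolding nonneg_mat_def z_def by (intro sum_mono mult_right_mono) auto
        also have "\<dots> = (z v* Q)$j" by (simp add: vm_nth)
        finally show ?thesis .
      next
        case False
        then have "z$j = 0" by (simp add: z_def)
        then show ?thesis using zQ by simp
      qed
    qed
  qed
  show "\<forall>j. w$j \<ge> 0"
  proof
    fix j
    have "z$j = 0" using \<open>z = 0\<close> by simp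
    then have "max (- w$j) 0 = 0" by (simp add: z_def)
    then show "w$j \<ge> 0" by (simp add: max_def split: if_splits)
  qed
qed

lemma transpose_I_minus: "transpose (mat 1 - Q) = mat 1 - transpose (Q::real^'n^'n)"
  by (simp add: transpose_def mat_def vec_eq_iff)

lemma right_neumann:
  fixes Q :: "real^'n^'n"
  assumes nn: "nonneg_mat Q" and u: "\<forall>i. u$i > 0" and uQ: "\<forall>i. (u v* Q)$i < u$i"
  shows "invertible (mat 1 - Q)"
    and "\<forall>j. ((mat 1 - Q) *v x)$j \<ge> 0 \<Longrightarrow> \<forall>j. x$j \<ge> 0"
proof -
  have nn': "nonneg_mat (transpose Q)" using nn by (rule nonneg_transpose)
  have Qv: "\<forall>i. (transpose Q *v u)$i < u$i" using uQ by simp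
  have "invertible (mat 1 - transpose Q)" by (rule left_neumann(1)[OF nn' u Qv])
  then have "invertible (transpose (mat 1 - Q))" by (simp only: transpose_I_minus)
  then have "invertible (transpose (transpose (mat 1 - Q)))" by (rule transpose_invertible)
  then show "invertible (mat 1 - Q)" by simp
  assume "\<forall>j. ((mat 1 - Q) *v x)$j \<ge> 0"
  moreover have "x v* (mat 1 - transpose Q) = (mat 1 - Q) *v x"
    by (simp only: transpose_I_minus[symmetric] vector_transpose_matrix)
  ultimately have "\<forall>j. (x v* (mat 1 - transpose Q))$j \<ge> 0" by simp
  then show "\<forall>j. x$j \<ge> 0" by (rule left_neumann(2)[OF nn' u Qv])
qed




lemma Kdiag_nth: "(K ** diag_mat d) $ i $ j = K$i$j * d$j"
  by (simp add: mm_nth diag_mat_def if_distrib if_distribR cong del: if_weak_cong)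

lemma diagM_nth: "(diag_mat d ** X) $ i $ j = d$i * X$i$j"
  by (simp add: mm_nth diag_mat_def if_distrib if_distribR cong del: if_weak_cong)

lemma vIM: "x v* (mat 1 - M) = x - x v* (M::real^'n^'n)"
  by (simp add: vector_matrix_mult_diff_rdistrib)

lemma pos_irreducible:
  fixes M :: "real^'n^'n"
  assumes "\<forall>i j. M$i$j > 0"
  shows "irreducible_mat M"
  unfolding irreducible_mat_def
proof (intro allI impI)
  fix S :: "'n set" assume "S \<noteq> {} \<and> S \<noteq> UNIV"
  then obtain i j where "i \<in> S" "j \<notin> S" by auto
  then show "\<exists>i\<in>S. \<exists>j. j \<notin> S \<and> M $ i $ j \<noteq> 0" using assms by (metis less_irrefl)
qed

lemma pos_nonneg: "\<forall>i j. M$i$j > (0::real) \<Longrightarrow> nonneg_mat M"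
  by (simp add: nonneg_mat_def less_imp_le)

lemma left_perron:
  fixes P :: "real^'n^'n"
  assumes n2: "CARD('n) \<ge> 2" and nn: "nonneg_mat P" and irr: "irreducible_mat P"
  shows "\<exists>u c. (\<forall>i. u$i > 0) \<and> u v* P = c *\<^sub>R u"
  using perron_exists[OF n2 nonneg_transpose[OF nn] irreducible_transpose[OF irr]] by simp

locale econ =
  fixes A K B :: "real^'n^'n" and \<delta> l :: "real^'n" and rA rstar :: real
  assumes n2: "CARD('n) \<ge> 2"
    and A_nn: "nonneg_mat A" and K_nn: "nonneg_mat K" and K_nz: "K \<noteq> 0"
    and \<delta>_rng: "\<forall>j. 0 < \<delta> $ j \<and> \<delta> $ j \<le> 1"
    and l_pos: "\<forall>j. l $ j > 0"
    and B_nn: "nonneg_mat B" and B_col: "\<forall>j. \<exists>i. B $ i $ j \<noteq> 0"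
    and irr: "irreducible_mat (tildeA A K \<delta>)"
    and rA_def: "spec_rad (tildeA A K \<delta> + rA *\<^sub>R K) = 1"
    and rstar: "0 < rstar" "rstar < rA"
begin

definition PP :: "real \<Rightarrow> real^'n^'n" where "PP r = tildeA A K \<delta> + r *\<^sub>R K"
definition NN :: "real \<Rightarrow> real^'n^'n" where "NN r = matrix_inv (mat 1 - PP r)"
abbreviation MM :: "real \<Rightarrow> real^'n^'n" where "MM r \<equiv> Mmat A K \<delta> l B r"

lemma At_nth: "tildeA A K \<delta> $ i $ j = A$i$j + K$i$j * \<delta>$j"
  by (simp add: tildeA_def Kdiag_nth)

lemma PP_nth: "PP r $ i $ j = A$i$j + K$i$j * \<delta>$j + r * K$i$j"
  by (simp add: PP_def At_nth)

lemma At_nn: "nonneg_mat (tildeA A K \<delta>)"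
  using A_nn K_nn \<delta>_rng unfolding nonneg_mat_def by (simp add: At_nth less_imp_le)

lemma PP_nn: "r \<ge> 0 \<Longrightarrow> nonneg_mat (PP r)"
  using A_nn K_nn \<delta>_rng unfolding nonneg_mat_def by (simp add: PP_nth less_imp_le)

lemma PP_irr: assumes "r \<ge> 0" shows "irreducible_mat (PP r)"
  unfolding irreducible_mat_def
proof (intro allI impI)
  fix S :: "'n set" assume "S \<noteq> {} \<and> S \<noteq> UNIV"
  then have "\<exists>i\<in>S. \<exists>j. j \<notin> S \<and> tildeA A K \<delta> $ i $ j \<noteq> 0" using irrD[OF irr] by blast
  then obtain i j where ij: "i \<in> S" "j \<notin> S" "tildeA A K \<delta> $ i $ j \<noteq> 0" by blast
  have "tildeA A K \<delta> $ i $ j \<ge> 0" using At_nn unfolding nonneg_mat_def by simp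
  then have "tildeA A K \<delta> $ i $ j > 0" using ij by simp
  moreover have "r * K$i$j \<ge> 0" using K_nn assms unfolding nonneg_mat_def by simp
  ultimately have "PP r $ i $ j > 0" by (simp add: PP_nth At_nth)
  then show "\<exists>i\<in>S. \<exists>j. j \<notin> S \<and> PP r $ i $ j \<noteq> 0" using ij by (metis less_irrefl)
qed

lemma rA_nonneg: "rA \<ge> 0" using rstar by simp

lemma vA_ex: "\<exists>v. (\<forall>i. v$i > 0) \<and> PP rA *v v = v"
proof -
  obtain v c where v: "\<forall>i. v$i > 0" "PP rA *v v = c *\<^sub>R v"
    using perron_exists[OF n2 PP_nn[OF rA_nonneg] PP_irr[OF rA_nonneg]] by blast
  obtain u c' where u: "\<forall>i. u$i > 0" "u v* PP rA = c' *\<^sub>R u"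
    using left_perron[OF n2 PP_nn[OF rA_nonneg] PP_irr[OF rA_nonneg]] by blast
  have "spec_rad (PP rA) = c" using spec_rad_eq[OF PP_nn[OF rA_nonneg] v u] by simp
  then have "c = 1" using rA_def by (simp add: PP_def)
  then show ?thesis using v by auto
qed

lemma K_pos_entry: "\<exists>a b. K$a$b > 0"
proof -
  obtain a b where "K$a$b \<noteq> 0" using K_nz by (auto simp: vec_eq_iff)
  then show ?thesis using K_nn unfolding nonneg_mat_def by (metis order_le_neq_trans)
qed

lemma NN_props:
  assumes r: "0 \<le> r" "r < rA"
  shows "invertible (mat 1 - PP r)" "\<forall>i j. NN r $ i $ j > 0"
proof -
  obtain vA where vA: "\<forall>i. vA$i > 0" "PP rA *v vA = vA" using vA_ex by blast
  obtain u c where u: "\<forall>i. u$i > 0" "u v* PP r = c *\<^sub>R u"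
    using left_perron[OF n2 PP_nn[OF r(1)] PP_irr[OF r(1)]] by blast
  have PPr: "PP r = PP rA - (rA - r) *\<^sub>R K" by (simp add: PP_def algebra_simps)
  have "PP r *v vA = vA - (rA - r) *\<^sub>R (K *v vA)"
    unfolding PPr by (simp add: matrix_vector_mult_diff_rdistrib vA scaleR_matrix_vector_assoc)
  then have e1: "inner u (PP r *v vA) = inner u vA - (rA - r) * inner u (K *v vA)"
    by (simp add: inner_diff_right)
  have e2: "inner u (PP r *v vA) = c * inner u vA"
    using dot_lmul_matrix[of u "PP r" vA] u by simp
  obtain a b where ab: "K$a$b > 0" using K_pos_entry by blast
  have Kv0: "(K *v vA)$i \<ge> 0" for i unfolding mv_nth using K_nn vA unfolding nonneg_mat_def
    by (intro sum_nonneg mult_nonneg_nonneg) (auto simp: less_imp_le)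
  have "0 < K$a$b * vA$b" using ab vA by simp
  also have "\<dots> \<le> (K *v vA)$a" unfolding mv_nth using K_nn vA unfolding nonneg_mat_def
    by (intro sum_ge_term) (auto simp: less_imp_le)
  finally have Kva: "(K *v vA)$a > 0" .
  have "inner u (K *v vA) > 0" unfolding inner_vec_def using u Kv0 Kva
    by (intro sum_pos2[where i=a]) (auto intro!: mult_nonneg_nonneg simp: less_imp_le)
  moreover have "inner u vA > 0" using inner_pos[OF u(1) vA(1)] .
  ultimately have "c * inner u vA < inner u vA" using e1 e2 r
    by (smt (verit, best) mult_pos_pos)
  then have c1: "c < 1" using \<open>inner u vA > 0\<close> by simp
  have uQ: "\<forall>i. (u v* PP r)$i < u$i" using u c1 by simp
  show inv: "invertible (mat 1 - PP r)" by (rule right_neumann(1)[OF PP_nn[OF r(1)] u(1) uQ])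
  have ip: "(mat 1 - PP r) ** NN r = mat 1" using matrix_inv_props[OF inv] by (simp add: NN_def)
  show "\<forall>i j. NN r $ i $ j > 0"
  proof (intro allI)
    fix i j
    define x where "x = NN r *v axis j 1"
    have xe: "(mat 1 - PP r) *v x = axis j 1"
      unfolding x_def matrix_vector_mul_assoc ip by simp
    have x0: "\<forall>k. x$k \<ge> 0"
      by (rule right_neumann(2)[OF PP_nn[OF r(1)] u(1) uQ]) (simp add: xe axis_def)
    have xnz: "x \<noteq> 0"
    proof
      assume "x = 0" then have "axis j (1::real) = 0" using xe by simp
      then show False by (simp add: axis_eq_0_iff)
    qed
    have "\<forall>k. x$k > 0"
    proof (rule pos_lemma[OF PP_nn[OF r(1)] PP_irr[OF r(1)] x0 xnz], intro allI impI)
      fix k assume "x$k = 0"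
      have e: "x - PP r *v x = axis j 1" using xe by (simp add: matrix_vector_mult_diff_rdistrib)
      have "(PP r *v x) = x - axis j 1" by (simp add: e[symmetric])
      then show "(PP r *v x)$k \<le> 0" using \<open>x$k = 0\<close> by (simp add: axis_def)
    qed
    moreover have "x$i = NN r $ i $ j"
      unfolding x_def matrix_vector_mult_basis by (simp add: column_def)
    ultimately show "NN r $ i $ j > 0" by metis
  qed
qed

end




context econ begin

lemma M_eq: "MM r = diag_mat l ** NN r ** B"
proof -
  have e: "mat 1 - tildeA A K \<delta> - r *\<^sub>R K = mat 1 - PP r" by (simp add: PP_def diff_diff_eq)
  show ?thesis unfolding Mmat_def NN_def e ..
qed

lemma M_nth: "MM r $ i $ j = l$i * (\<Sum>k\<in>UNIV. NN r $ i $ k * B$k$j)"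
  unfolding M_eq by (simp add: mm_nth[of "diag_mat l ** NN r"] diagM_nth sum_distrib_left mult.assoc)

lemma B_pos_entry: "\<exists>k. B$k$j > 0"
proof -
  obtain k where "B$k$j \<noteq> 0" using B_col by blast
  then show ?thesis using B_nn unfolding nonneg_mat_def by (metis order_le_neq_trans)
qed

lemma M_pos:
  assumes "0 \<le> r" "r < rA"
  shows "MM r $ i $ j > 0"
proof -
  obtain k where k: "B$k$j > 0" using B_pos_entry by blast
  have "(\<Sum>k\<in>UNIV. NN r $ i $ k * B$k$j) > 0"
    using NN_props(2)[OF assms] k B_nn unfolding nonneg_mat_def
    by (intro sum_pos2[where i=k]) (auto intro!: mult_nonneg_nonneg simp: less_imp_le)
  then show ?thesis unfolding M_nth using l_pos by simp
qed

lemma NN_mono: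
  assumes r: "0 \<le> r1" "r1 < r2" "r2 < rA"
  shows "NN r1 $ i $ j < NN r2 $ i $ j"
proof -
  have r2: "0 \<le> r2" "r2 < rA" using r by auto
  have r1A: "r1 < rA" using r by simp
  define X1 where "X1 = mat 1 - PP r1"
  define X2 where "X2 = mat 1 - PP r2"
  have i1: "X1 ** NN r1 = mat 1" using matrix_inv_props[OF NN_props(1)[OF r(1) r1A]]
    by (simp add: NN_def X1_def)
  have i2: "NN r2 ** X2 = mat 1" using matrix_inv_props[OF NN_props(1)[OF r2]]
    by (simp add: NN_def X2_def)
  have "NN r2 ** (X1 - X2) ** NN r1 = NN r2 ** (X1 ** NN r1) - (NN r2 ** X2) ** NN r1"
    by (simp add: matrix_diff_ldistrib matrix_diff_rdistrib matrix_mul_assoc)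
  also have "\<dots> = NN r2 - NN r1" using i1 i2 by simp
  finally have eq: "NN r2 - NN r1 = NN r2 ** (X1 - X2) ** NN r1" by simp
  have "X1 - X2 = (r2 - r1) *\<^sub>R K" by (simp add: X1_def X2_def PP_def algebra_simps)
  then have eq2: "NN r2 - NN r1 = (r2 - r1) *\<^sub>R (NN r2 ** K ** NN r1)"
    using eq by (simp add: matrix_scalar_ac scalar_matrix_assoc)
  obtain a b where ab: "K$a$b > 0" using K_pos_entry by blast
  have N1: "\<forall>i j. NN r1 $ i $ j > 0" using NN_props(2)[OF r(1) r1A] .
  have N2: "\<forall>i j. NN r2 $ i $ j > 0" using NN_props(2)[OF r2] .
  have NK0: "(NN r2 ** K) $ i $ k \<ge> 0" for k unfolding mm_nth
    using N2 K_nn unfolding nonneg_mat_def by (intro sum_nonneg mult_nonneg_nonneg) (auto simp: less_imp_le)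
  have "0 < NN r2 $ i $ a * K$a$b" using N2 ab by simp
  also have "\<dots> \<le> (NN r2 ** K) $ i $ b" unfolding mm_nth
    using N2 K_nn unfolding nonneg_mat_def by (intro sum_ge_term) (auto simp: less_imp_le)
  finally have NKb: "(NN r2 ** K) $ i $ b > 0" .
  have "0 < (NN r2 ** K) $ i $ b * NN r1 $ b $ j" using NKb N1 by simp
  also have "\<dots> \<le> (NN r2 ** K ** NN r1) $ i $ j" unfolding mm_nth[of "NN r2 ** K"]
    using NK0 N1 by (intro sum_ge_term) (auto intro!: mult_nonneg_nonneg simp: less_imp_le)
  finally have "(NN r2 ** K ** NN r1) $ i $ j > 0" .
  moreover have "NN r2 $ i $ j - NN r1 $ i $ j = (r2 - r1) * (NN r2 ** K ** NN r1) $ i $ j"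
    using arg_cong[OF eq2, of "\<lambda>X. X $ i $ j"] by simp
  ultimately show ?thesis using r by (smt (verit) mult_pos_pos)
qed

lemma M_mono:
  assumes r: "0 \<le> r1" "r1 < r2" "r2 < rA"
  shows "MM r1 $ i $ j < MM r2 $ i $ j"
proof -
  obtain k where k: "B$k$j > 0" using B_pos_entry by blast
  have "(\<Sum>k\<in>UNIV. NN r1 $ i $ k * B$k$j) < (\<Sum>k\<in>UNIV. NN r2 $ i $ k * B$k$j)"
  proof (rule sum_strict_mono_ex1)
    show "\<forall>x\<in>UNIV. NN r1 $ i $ x * B $ x $ j \<le> NN r2 $ i $ x * B $ x $ j"
      by (intro ballI mult_right_mono less_imp_le[OF NN_mono[OF r]]) (use B_nn in \<open>simp add: nonneg_mat_def\<close>)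
    show "\<exists>a\<in>UNIV. NN r1 $ i $ a * B $ a $ j < NN r2 $ i $ a * B $ a $ j"
      using NN_mono[OF r] k by (intro bexI[of _ k]) auto
  qed simp
  then show ?thesis unfolding M_nth using l_pos by simp
qed

lemma vM_mono:
  assumes r: "0 \<le> r1" "r1 < r2" "r2 < rA" and w: "\<forall>i. w$i > 0"
  shows "(w v* MM r1) $ j < (w v* MM r2) $ j"
  unfolding vm_nth using M_mono[OF r] w
  by (intro sum_strict_mono) auto

lemma theta_mono:
  assumes r: "0 \<le> r1" "r1 < r2" "r2 < rA"
  shows "Theta_price i1 A K \<delta> l B r2 \<subseteq> Theta_price i1 A K \<delta> l B r1"
proof
  fix w assume "w \<in> Theta_price i1 A K \<delta> l B r2"
  then have w: "\<forall>j. w$j > 0" "w$i1 = 1" "\<forall>j. (w v* (mat 1 - MM r2))$j \<ge> 0"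
    unfolding Theta_price_def by auto
  have "(w v* (mat 1 - MM r1))$j \<ge> 0" for j
    using w(3)[rule_format, of j] vM_mono[OF r w(1), of j] by (simp add: vIM)
  then show "w \<in> Theta_price i1 A K \<delta> l B r1" using w unfolding Theta_price_def by auto
qed

lemma theta_val: "Theta_val i1 A K \<delta> l B = Theta_price i1 A K \<delta> l B 0"
  unfolding Theta_val_def Theta_price_def by simp

end




context econ begin

lemma nonneg_zero:
  fixes y v :: "real^'n"
  assumes "\<forall>j. y$j \<ge> 0" "\<forall>j. v$j > 0" "inner y v = 0"
  shows "y = 0"
proof -
  have "\<forall>j\<in>UNIV. y$j * v$j = 0"
    using assms unfolding inner_vec_def
    by (subst sum_nonneg_eq_0_iff[symmetric]) (auto intro!: mult_nonneg_nonneg simp: less_imp_le)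
  then show ?thesis using assms(2) by (auto simp: vec_eq_iff) (metis less_irrefl)
qed

lemma other_index: "\<exists>j::'n. j \<noteq> i"
proof (rule ccontr)
  assume "\<not> (\<exists>j::'n. j \<noteq> i)"
  then have "(UNIV::'n set) = {i}" by auto
  then have "CARD('n) = card {i}" by (rule arg_cong)
  then show False using n2 by simp
qed

lemma main_in_locale:
  assumes sr: "spec_rad (MM rstar) = 1"
  shows "(\<forall>r1 r2. 0 \<le> r1 \<and> r1 < r2 \<and> r2 \<le> rstar \<longrightarrow>
            Theta_price i1 A K \<delta> l B r2 \<subset> Theta_price i1 A K \<delta> l B r1 \<and>
            Theta_price i1 A K \<delta> l B r1 \<subseteq> Theta_val i1 A K \<delta> l B)
       \<and> (\<exists>wstar. Theta_price i1 A K \<delta> l B rstar = {wstar}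
            \<and> (\<forall>j. wstar $ j > 0) \<and> wstar $ i1 = 1
            \<and> wstar v* MM rstar
                 = spec_rad (MM rstar) *\<^sub>R wstar)
       \<and> \<not> (\<exists>w \<in> Theta_price i1 A K \<delta> l B rstar.
              \<forall>j. (w v* (mat 1 - MM rstar)) $ j > 0)"
proof -
  let ?M = "MM rstar"
  have rs: "0 \<le> rstar" "rstar < rA" using rstar by auto
  have Mp: "\<forall>i j. ?M $ i $ j > 0" using M_pos[OF rs] by blast
  obtain vs c where vs: "\<forall>i. vs$i > 0" "?M *v vs = c *\<^sub>R vs"
    using perron_exists[OF n2 pos_nonneg[OF Mp] pos_irreducible[OF Mp]] by blast
  obtain w0 c' where w0: "\<forall>i. w0$i > 0" "w0 v* ?M = c' *\<^sub>R w0"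
    using left_perron[OF n2 pos_nonneg[OF Mp] pos_irreducible[OF Mp]] by blast
  have "spec_rad ?M = c \<and> c' = c" by (rule spec_rad_eq[OF pos_nonneg[OF Mp] vs w0])
  then have cc: "c = 1" "c' = 1" using sr by auto
  have Mvs: "?M *v vs = vs" using vs cc by simp
  have w0M: "w0 v* ?M = w0" using w0 cc by simp
  have zero: "w v* (mat 1 - ?M) = 0" if "w \<in> Theta_price i1 A K \<delta> l B rstar" for w
  proof (rule nonneg_zero[OF _ vs(1)])
    show "\<forall>j. 0 \<le> (w v* (mat 1 - ?M)) $ j" using that unfolding Theta_price_def by auto
    have "inner (w v* (mat 1 - ?M)) vs = inner w vs - inner (w v* ?M) vs"
      by (simp add: vIM inner_diff_left)
    also have "\<dots> = 0" using dot_lmul_matrix[of w ?M vs] Mvs by simp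
    finally show "inner (w v* (mat 1 - ?M)) vs = 0" .
  qed
  define wstar where "wstar = (1 / w0$i1) *\<^sub>R w0"
  have ws_pos: "\<forall>j. wstar $ j > 0" using w0(1) unfolding wstar_def by simp
  have ws1: "wstar $ i1 = 1" using w0(1)[rule_format, of i1] unfolding wstar_def by simp
  have wsM: "wstar v* ?M = wstar" unfolding wstar_def by (simp add: scaleR_vector_matrix_assoc w0M)
  have ws_in: "wstar \<in> Theta_price i1 A K \<delta> l B rstar"
    unfolding Theta_price_def using ws_pos ws1 wsM by (simp add: vIM)
  have uniq: "w = wstar" if wT: "w \<in> Theta_price i1 A K \<delta> l B rstar" for w
  proof -
    have wM: "w v* ?M = w" using zero[OF wT] by (simp add: vIM)
    have w1: "w$i1 = 1" using wT unfolding Theta_price_def by simp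
    define d where "d = w - wstar"
    have dM: "d v* ?M = d" unfolding d_def by (simp add: vector_matrix_mult_diff_distrib wM wsM)
    have d1: "d$i1 = 0" unfolding d_def using w1 ws1 by simp
    define a where "a = (\<chi> j. \<bar>d$j\<bar>)"
    have a0: "\<forall>j. a$j \<ge> 0" by (simp add: a_def)
    have aM: "a$j \<le> (a v* ?M)$j" for j
    proof -
      have "a$j = \<bar>\<Sum>i\<in>UNIV. d$i * ?M$i$j\<bar>" unfolding a_def
        using dM by (metis vec_lambda_beta vm_nth)
      also have "\<dots> \<le> (\<Sum>i\<in>UNIV. \<bar>d$i * ?M$i$j\<bar>)" by (rule sum_abs)
      also have "\<dots> = (a v* ?M)$j" unfolding vm_nth a_def
        using Mp by (simp add: abs_mult less_imp_le)
      finally show ?thesis .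
    qed
    have "a v* ?M - a = 0"
    proof (rule nonneg_zero[OF _ vs(1)])
      show "\<forall>j. 0 \<le> (a v* ?M - a) $ j" using aM by simp
      have "inner (a v* ?M - a) vs = inner a (?M *v vs) - inner a vs"
        by (simp add: inner_diff_left dot_lmul_matrix)
      then show "inner (a v* ?M - a) vs = 0" using Mvs by simp
    qed
    then have aeq: "(a v* ?M)$i1 = a$i1" by simp
    have "a = 0"
    proof (rule ccontr)
      assume "a \<noteq> 0"
      then obtain k where "a$k \<noteq> 0" by (auto simp: vec_eq_iff)
      then have ak: "a$k > 0" using a0 by (metis order_le_neq_trans)
      have "0 < a$k * ?M$k$i1" using ak Mp by simp
      also have "\<dots> \<le> (a v* ?M)$i1" unfolding vm_nth
        using a0 Mp by (intro sum_ge_term) (auto intro!: mult_nonneg_nonneg simp: less_imp_le)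
      finally show False using aeq d1 by (simp add: a_def)
    qed
    then have "d = 0" by (simp add: a_def vec_eq_iff)
    then show ?thesis by (simp add: d_def)
  qed
  have part2: "Theta_price i1 A K \<delta> l B rstar = {wstar}" using ws_in uniq by blast
  have part3: "\<not> (\<exists>w \<in> Theta_price i1 A K \<delta> l B rstar.
              \<forall>j. (w v* (mat 1 - ?M)) $ j > 0)"
    using zero by fastforce
  have part1: "Theta_price i1 A K \<delta> l B r2 \<subset> Theta_price i1 A K \<delta> l B r1 \<and>
            Theta_price i1 A K \<delta> l B r1 \<subseteq> Theta_val i1 A K \<delta> l B"
    if r: "0 \<le> r1" "r1 < r2" "r2 \<le> rstar" for r1 r2
  proof -
    have r2A: "r2 < rA" using r rstar by simp
    have sub: "Theta_price i1 A K \<delta> l B r2 \<subseteq> Theta_price i1 A K \<delta> l B r1"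
      by (rule theta_mono[OF r(1,2) r2A])
    have val: "Theta_price i1 A K \<delta> l B r1 \<subseteq> Theta_val i1 A K \<delta> l B"
    proof (cases "r1 = 0")
      case True then show ?thesis by (simp add: theta_val)
    next
      case False
      then show ?thesis unfolding theta_val using r r2A by (intro theta_mono) auto
    qed
    let ?M1 = "MM r1"
    have r1s: "r1 < rstar" using r by simp
    have Mp1: "\<forall>i j. ?M1 $ i $ j > 0" using M_pos[OF r(1)] r r2A by simp
    have M1v: "\<forall>i. (?M1 *v vs)$i < vs$i"
    proof
      fix i
      have "(?M1 *v vs)$i < (?M *v vs)$i" unfolding mv_nth
        using M_mono[OF r(1) r1s rs(2)] vs(1) by (intro sum_strict_mono) auto
      then show "(?M1 *v vs)$i < vs$i" using Mvs by simp
    qed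
    note LN = left_neumann[OF pos_nonneg[OF Mp1] vs(1) M1v]
    obtain j0 where j0: "j0 \<noteq> i1" using other_index by blast
    define y :: "real^'n" where "y = axis i1 1"
    define w1 where "w1 = y v* matrix_inv (mat 1 - ?M1)"
    have w1e: "w1 v* (mat 1 - ?M1) = y"
      unfolding w1_def vector_matrix_mul_assoc using matrix_inv_props[OF LN(1)] by simp
    have w10: "\<forall>j. w1$j \<ge> 0" by (rule LN(2)) (simp add: w1e y_def axis_def)
    have w1nz: "w1 \<noteq> 0"
    proof
      assume "w1 = 0" then have "y = 0" using w1e by simp
      then show False by (simp add: y_def axis_eq_0_iff)
    qed
    have w1pos: "\<forall>k. w1$k > 0"
    proof
      fix k
      obtain m where "w1$m \<noteq> 0" using w1nz by (auto simp: vec_eq_iff)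
      then have wm: "w1$m > 0" using w10 by (metis order_le_neq_trans)
      have "0 < w1$m * ?M1$m$k" using wm Mp1 by simp
      also have "\<dots> \<le> (w1 v* ?M1)$k" unfolding vm_nth
        using w10 Mp1 by (intro sum_ge_term) (auto intro!: mult_nonneg_nonneg simp: less_imp_le)
      also have "\<dots> \<le> w1$k"
      proof -
        have "w1$k - (w1 v* ?M1)$k = y$k" using arg_cong[OF w1e, of "\<lambda>x. x$k"] by (simp add: vIM)
        moreover have "y$k \<ge> 0" by (simp add: y_def axis_def)
        ultimately show ?thesis by linarith
      qed
      finally show "w1$k > 0" .
    qed
    define w where "w = (1 / w1$i1) *\<^sub>R w1"
    have wpos: "\<forall>j. w$j > 0" using w1pos unfolding w_def by simp
    have wi1: "w$i1 = 1" using w1pos[rule_format, of i1] unfolding w_def by simp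
    have we: "w v* (mat 1 - ?M1) = (1 / w1$i1) *\<^sub>R y"
      unfolding w_def scaleR_vector_matrix_assoc w1e ..
    have win: "w \<in> Theta_price i1 A K \<delta> l B r1"
      unfolding Theta_price_def using wpos wi1 we w1pos[rule_format, of i1]
      by (simp add: y_def axis_def)
    have "(w v* (mat 1 - MM r2))$j0 < (w v* (mat 1 - ?M1))$j0"
      using vM_mono[OF r(1,2) r2A wpos, of j0] by (simp add: vIM)
    also have "\<dots> = 0" using we j0 by (simp add: y_def axis_def)
    finally have "w \<notin> Theta_price i1 A K \<delta> l B r2"
      unfolding Theta_price_def by (metis (mono_tags, lifting) mem_Collect_eq not_le)
    then have "Theta_price i1 A K \<delta> l B r2 \<subset> Theta_price i1 A K \<delta> l B r1"
      using sub win by blast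
    then show ?thesis using val by simp
  qed
  show ?thesis using part1 part2 part3 ws_pos ws1 wsM sr by auto
qed

end




theorem mainTheorem10:
  fixes A K B :: "real^'n^'n" and \<delta> l :: "real^'n" and i1 :: 'n
    and rA rstar :: real
  assumes n2: "CARD('n) \<ge> 2"
    and A_nn: "nonneg_mat A" and K_nn: "nonneg_mat K" and K_nz: "K \<noteq> 0"
    and \<delta>_rng: "\<forall>j. 0 < \<delta> $ j \<and> \<delta> $ j \<le> 1"
    and l_pos: "\<forall>j. l $ j > 0"
    and B_nn: "nonneg_mat B" and B_col: "\<forall>j. \<exists>i. B $ i $ j \<noteq> 0"
    and irr: "irreducible_mat (tildeA A K \<delta>)"
    and rho_At: "spec_rad (tildeA A K \<delta>) < 1"
    and rA_pos: "rA > 0" and rA_def: "spec_rad (tildeA A K \<delta> + rA *\<^sub>R K) = 1"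
    and M0: "spec_rad (Mmat A K \<delta> l B 0) < 1"
    and rstar: "0 < rstar" "rstar < rA" "spec_rad (Mmat A K \<delta> l B rstar) = 1"
  shows "(\<forall>r1 r2. 0 \<le> r1 \<and> r1 < r2 \<and> r2 \<le> rstar \<longrightarrow>
            Theta_price i1 A K \<delta> l B r2 \<subset> Theta_price i1 A K \<delta> l B r1 \<and>
            Theta_price i1 A K \<delta> l B r1 \<subseteq> Theta_val i1 A K \<delta> l B)
       \<and> (\<exists>wstar. Theta_price i1 A K \<delta> l B rstar = {wstar}
            \<and> (\<forall>j. wstar $ j > 0) \<and> wstar $ i1 = 1
            \<and> wstar v* Mmat A K \<delta> l B rstar
                 = spec_rad (Mmat A K \<delta> l B rstar) *\<^sub>R wstar)
       \<and> \<not> (\<exists>w \<in> Theta_price i1 A K \<delta> l B rstar.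
              \<forall>j. (w v* (mat 1 - Mmat A K \<delta> l B rstar)) $ j > 0)"
  proof -
  have sr: "spec_rad (Mmat A K \<delta> l B rstar) = 1" using rstar(3) .
  interpret econ A K B \<delta> l rA rstar
    using n2 A_nn K_nn K_nz \<delta>_rng l_pos B_nn B_col irr rA_def rstar(1,2)
    by unfold_locales auto
  show ?thesis by (rule main_in_locale[OF sr])
qed

end
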